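(* For $a\in\mathfrak z$ and $w\in\mathfrak{H}^1$: (i) $S_\hbar^t(a\circ_+w)=a\circ_+S_\hbar^t(w)$; (ii) $S_\hbar^t(wy)=\gamma_\hbar^t(w)\,y$, where $\gamma_\hbar^t$ is the algebra automorphism of $\mathfrak{H}$ with $\gamma_\hbar^t(x)=x$ and $\gamma_\hbar^t(y)=tx+y+\hbar t$.
   Context: Let $\hbar,t$ be formal variables and $\mathfrak{H}=\mathbb{Q}[\hbar,t]\langle x,y\rangle$ the noncommutative polynomial algebra over $\mathbb{Q}[\hbar,t]$; put $\mathfrak{H}^1=\mathbb{Q}[\hbar,t]+\mathfrak{H}y$ and $z_j=x^{j-1}y$ ($j\ge1$). Let $\mathfrak z$ be the $\mathbb{Q}[\hbar,t]$-submodule spanned by $\{z_j\}_{j\ge1}$, with the $\mathbb{Q}[\hbar,t]$-bilinear product $z_i\circ_+ z_j=z_{i+j}+\hbar z_{i+j-1}$, extended to an action of $\mathfrak z$ on $\mathfrak{H}^1$ by $z_i\circ_+1=0$, $z_i\circ_+(z_jw)=(z_i\circ_+z_j)w$ ($w\in\mathfrak{H}^1$). Let $S_\hbar^t:\mathfrak{H}^1\to\mathfrak{H}^1$ be the $\mathbb{Q}[\hbar,t]$-linear map with $S_\hbar^t(1)=1$ and $S_\hbar^t(z_kw)=z_kS_\hbar^t(w)+t\,z_k\circ_+S_\hbar^t(w)$ for $k\ge1$ and words $w\in\mathfrak{H}^1$. *)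

theory Defs
  imports "HOL-Library.Poly_Mapping" "HOL-Computational_Algebra.Polynomial"
begin

text \<open>Coefficient ring Q[hbar,t], realised as (Q[hbar])[t] = rat poly poly.\<close>
type_synonym coeff = "rat poly poly"

definition tt :: coeff where "tt = [:0, 1:]"
definition hb :: coeff where "hb = [:[:0, 1:]:]"

datatype letter = X | Y
type_synonym word = "letter list"

text \<open>The noncommutative polynomial algebra H = Q[hbar,t]<x,y>: finitely supported
  coefficient functions on words.\<close>
type_synonym H = "word \<Rightarrow>\<^sub>0 coeff"

definition mon :: "word \<Rightarrow> H" where "mon u = Poly_Mapping.single u 1"
definition hone :: H where "hone = mon []"
definition hx :: H where "hx = mon [X]"
definition hy :: H where "hy = mon [Y]"

definition scal :: "coeff \<Rightarrow> H \<Rightarrow> H" where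
  "scal c p = Poly_Mapping.map (\<lambda>a. c * a) p"

definition cst :: "coeff \<Rightarrow> H" where "cst c = scal c hone"

definition hmul :: "H \<Rightarrow> H \<Rightarrow> H" where
  "hmul p q = (\<Sum>u\<in>Poly_Mapping.keys p. \<Sum>v\<in>Poly_Mapping.keys q. Poly_Mapping.single (u @ v) (Poly_Mapping.lookup p u * Poly_Mapping.lookup q v))"

definition lin :: "(word \<Rightarrow> H) \<Rightarrow> H \<Rightarrow> H" where
  "lin f p = (\<Sum>u\<in>Poly_Mapping.keys p. scal (Poly_Mapping.lookup p u) (f u))"

text \<open>H^1 = Q[hbar,t] + H y: every word in the support is empty or ends in y.\<close>
definition H1 :: "H set" where
  "H1 = {p. \<forall>u\<in>Poly_Mapping.keys p. u = [] \<or> last u = Y}"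

definition zw :: "nat \<Rightarrow> word" where "zw j = replicate (j - 1) X @ [Y]"
definition z :: "nat \<Rightarrow> H" where "z j = mon (zw j)"

definition zmod :: "H set" where
  "zmod = {p. \<forall>u\<in>Poly_Mapping.keys p. \<exists>j\<ge>1. u = zw j}"

definition zprod :: "nat \<Rightarrow> nat \<Rightarrow> H" where
  "zprod i j = z (i + j) + scal hb (z (i + j - 1))"

text \<open>Decomposition of a nonempty word u = z_j w (j = number of leading x's + 1).\<close>
definition zidx :: "word \<Rightarrow> nat" where
  "zidx u = length (takeWhile (\<lambda>c. c = X) u) + 1"
definition zrest :: "word \<Rightarrow> word" where
  "zrest u = drop (zidx u) u"

definition zact :: "nat \<Rightarrow> word \<Rightarrow> H" where
  "zact i u = (if u = [] then 0 else hmul (zprod i (zidx u)) (mon (zrest u)))"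

text \<open>Bilinear extension: a o+ p for a in zmod and p in H^1
  (a word of zmod of the form x^(i-1) y has i = its length).\<close>
definition circ :: "H \<Rightarrow> H \<Rightarrow> H" where
  "circ a p = lin (\<lambda>v. lin (zact (length v)) p) a"

function Sw :: "word \<Rightarrow> H" where
  "Sw u = (if u = [] then hone
           else hmul (z (zidx u)) (Sw (zrest u)) + scal tt (circ (z (zidx u)) (Sw (zrest u))))"
  by auto
termination
  by (relation "measure length") (auto simp: zrest_def zidx_def)

definition S :: "H \<Rightarrow> H" where "S = lin Sw"

fun gw :: "word \<Rightarrow> H" where
  "gw [] = hone"
| "gw (X # u) = hmul hx (gw u)"
| "gw (Y # u) = hmul (scal tt hx + hy + cst (hb * tt)) (gw u)"

definition gamma :: "H \<Rightarrow> H" where "gamma = lin gw"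

end

theory Submission
  imports Defs
begin


lemma lookup_scal[simp]: "Poly_Mapping.lookup (scal c p) k = c * Poly_Mapping.lookup p k"
  unfolding scal_def by transfer (simp add: when_def)

lemma scal_add[simp]: "scal c (p + q) = scal c p + scal c q"
  by (rule poly_mapping_eqI) (simp add: lookup_add algebra_simps)
lemma scal_add_left: "scal (c + d) p = scal c p + scal d p"
  by (rule poly_mapping_eqI) (simp add: lookup_add algebra_simps)
lemma scal_scal[simp]: "scal c (scal d p) = scal (c * d) p"
  by (rule poly_mapping_eqI) (simp add: algebra_simps)
lemma scal_one[simp]: "scal 1 p = p"
  by (rule poly_mapping_eqI) simp
lemma scal_zero_left[simp]: "scal 0 p = 0"
  by (rule poly_mapping_eqI) simp
lemma scal_zero[simp]: "scal c 0 = 0"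
  by (rule poly_mapping_eqI) simp
lemma scal_sum: "scal c (sum f A) = (\<Sum>x\<in>A. scal c (f x))"
  by (induction A rule: infinite_finite_induct) auto
lemma scal_single: "scal c (Poly_Mapping.single u d) = Poly_Mapping.single u (c * d)"
  by (rule poly_mapping_eqI) (simp add: lookup_single when_def)
lemma keys_scal: "Poly_Mapping.keys (scal c p) \<subseteq> Poly_Mapping.keys p"
  by (auto simp: in_keys_iff)

lemma lin_superset:
  assumes "finite A" "Poly_Mapping.keys p \<subseteq> A"
  shows "lin f p = (\<Sum>u\<in>A. scal (Poly_Mapping.lookup p u) (f u))"
  unfolding lin_def using assms
  by (intro sum.mono_neutral_left) (auto simp: in_keys_iff)

lemma lin_add[simp]: "lin f (p + q) = lin f p + lin f q"
proof -
  let ?A = "Poly_Mapping.keys p \<union> Poly_Mapping.keys q"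
  have "lin f (p + q) = (\<Sum>u\<in>?A. scal (Poly_Mapping.lookup (p+q) u) (f u))"
    by (rule lin_superset) (auto simp: keys_add)
  also have "\<dots> = (\<Sum>u\<in>?A. scal (Poly_Mapping.lookup p u) (f u)) + (\<Sum>u\<in>?A. scal (Poly_Mapping.lookup q u) (f u))"
    by (simp add: lookup_add scal_add_left sum.distrib)
  also have "\<dots> = lin f p + lin f q"
    by (subst (1 2) lin_superset[symmetric]) auto
  finally show ?thesis .
qed

lemma lin_scal[simp]: "lin f (scal c p) = scal c (lin f p)"
proof -
  have "lin f (scal c p) = (\<Sum>u\<in>Poly_Mapping.keys p. scal (Poly_Mapping.lookup (scal c p) u) (f u))"
    by (rule lin_superset) (auto simp: keys_scal)
  then show ?thesis by (simp add: lin_def scal_sum)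
qed

lemma lin_zero[simp]: "lin f 0 = 0"
  by (simp add: lin_def)

lemma lin_single[simp]: "lin f (Poly_Mapping.single u c) = scal c (f u)"
  by (subst lin_superset[of "{u}"]) auto

lemma lin_mon[simp]: "lin f (mon u) = f u"
  by (simp add: mon_def)

lemma lin_sum: "lin f (sum g A) = (\<Sum>x\<in>A. lin f (g x))"
  by (induction A rule: infinite_finite_induct) auto

lemma lin_fadd: "lin (\<lambda>u. f u + g u) p = lin f p + lin g p"
  by (simp add: lin_def sum.distrib)

lemma lin_fscal: "lin (\<lambda>u. scal c (f u)) p = scal c (lin f p)"
  by (simp add: lin_def scal_sum mult.commute)

lemma lin_fzero[simp]: "lin (\<lambda>u. 0) p = 0"
  by (simp add: lin_def)

lemma lin_cong: "(\<And>u. u \<in> Poly_Mapping.keys p \<Longrightarrow> f u = g u) \<Longrightarrow> lin f p = lin g p"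
  by (simp add: lin_def)

lemma lin_comp: "lin g (lin f p) = lin (\<lambda>u. lin g (f u)) p"
proof -
  have "lin g (lin f p) = (\<Sum>u\<in>Poly_Mapping.keys p. scal (Poly_Mapping.lookup p u) (lin g (f u)))"
    by (simp only: lin_def[of f p] lin_sum lin_scal)
  then show ?thesis by (simp add: lin_def[of "\<lambda>u. lin g (f u)" p])
qed

lemma lin_swap: "lin (\<lambda>u. lin (\<lambda>v. F u v) q) p = lin (\<lambda>v. lin (\<lambda>u. F u v) p) q"
  by (simp add: lin_def scal_sum sum.swap[of _ "Poly_Mapping.keys p"] mult.commute)

lemma lin_mon_id: "lin mon p = p"
proof -
  have *: "finite I \<Longrightarrow> Poly_Mapping.lookup (\<Sum>i\<in>I. scal (Poly_Mapping.lookup p i) (mon i)) j =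
            (if j \<in> I then Poly_Mapping.lookup p j else 0)" for I j
    by (induction I rule: finite_induct) (auto simp: mon_def lookup_single lookup_add when_def)
  show ?thesis unfolding lin_def
    by (rule poly_mapping_eqI) (fastforce simp add: in_keys_iff *)
qed



lemma hmul_lin: "hmul p q = lin (\<lambda>u. lin (\<lambda>v. mon (u @ v)) q) p"
  by (simp add: hmul_def lin_def scal_sum mon_def scal_single mult.commute)

lemma hmul_lin_left: "hmul (lin f p) q = lin (\<lambda>u. hmul (f u) q) p"
  by (simp add: hmul_lin[of _ q] lin_comp)

lemma hmul_lin_right: "hmul p (lin f q) = lin (\<lambda>v. hmul p (f v)) q"
  by (simp add: hmul_lin[of p] lin_comp lin_swap[of _ q p])

lemma hmul_add_left[simp]: "hmul (p + p') q = hmul p q + hmul p' q"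
  by (simp add: hmul_lin[of _ q])
lemma hmul_add_right[simp]: "hmul p (q + q') = hmul p q + hmul p q'"
  by (simp add: hmul_lin[of p] lin_fadd)
lemma hmul_scal_left[simp]: "hmul (scal c p) q = scal c (hmul p q)"
  by (simp add: hmul_lin[of _ q])
lemma hmul_scal_right[simp]: "hmul p (scal c q) = scal c (hmul p q)"
  by (simp add: hmul_lin[of p] lin_fscal)
lemma hmul_zero_left[simp]: "hmul 0 q = 0"
  by (simp add: hmul_def)
lemma hmul_zero_right[simp]: "hmul p 0 = 0"
  by (simp add: hmul_def)
lemma hmul_mon_mon[simp]: "hmul (mon u) (mon v) = mon (u @ v)"
  by (simp add: hmul_lin)

lemma hmul_expand_left: "hmul p q = lin (\<lambda>u. hmul (mon u) q) p"
  using hmul_lin_left[of mon p q] by (simp add: lin_mon_id)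
lemma hmul_expand_right: "hmul p q = lin (\<lambda>v. hmul p (mon v)) q"
  using hmul_lin_right[of p mon q] by (simp add: lin_mon_id)

lemma hmul_mon_mon_assoc: "hmul (mon u) (hmul (mon v) r) = hmul (mon (u @ v)) r"
  by (subst (1 2 3) hmul_expand_right) (simp add: hmul_lin_right)

lemma hmul_assoc: "hmul (hmul p q) r = hmul p (hmul q r)"
proof -
  have "hmul (hmul p q) r = lin (\<lambda>u. lin (\<lambda>v. hmul (mon (u @ v)) r) q) p"
    by (subst hmul_expand_left[of p q]) (simp add: hmul_lin_left hmul_expand_right[of "mon _" q])
  also have "\<dots> = lin (\<lambda>u. lin (\<lambda>v. hmul (mon u) (hmul (mon v) r)) q) p"
    by (simp add: hmul_mon_mon_assoc)
  also have "\<dots> = hmul p (hmul q r)"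
    by (subst hmul_expand_left[of p]) (simp add: hmul_expand_left[of q r] hmul_lin_right)
  finally show ?thesis .
qed

lemma hmul_hone_left[simp]: "hmul hone q = q"
  by (subst hmul_expand_right) (simp add: hone_def lin_mon_id)
lemma hmul_hone_right[simp]: "hmul p hone = p"
  by (subst hmul_expand_left) (simp add: hone_def lin_mon_id)

declare hmul_mon_mon_assoc[simp]
declare Sw.simps[simp del]

lemma takeWhile_rep: "takeWhile (\<lambda>c. c = X) (replicate m X @ Y # r) = replicate m X"
  by (induction m) auto

lemma zw_Suc: "zw (Suc m) @ r = replicate m X @ Y # r"
  by (simp add: zw_def)

lemma zw_ge1: "j \<ge> 1 \<Longrightarrow> zw j @ r = replicate (j - 1) X @ Y # r"
  by (simp add: zw_def)

lemma length_zw[simp]: "j \<ge> 1 \<Longrightarrow> length (zw j) = j"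
  by (simp add: zw_def)

lemma zidx_zw: "j \<ge> 1 \<Longrightarrow> zidx (zw j @ r) = j"
  by (simp add: zw_ge1 zidx_def takeWhile_rep)

lemma zrest_zw: "j \<ge> 1 \<Longrightarrow> zrest (zw j @ r) = r"
  by (simp add: zrest_def zidx_zw)

lemma zidx_ge1: "zidx u \<ge> 1"
  by (simp add: zidx_def)
lemma zidx_ge1'[simp]: "Suc 0 \<le> zidx u"
  by (simp add: zidx_def)

lemma circ_z: "j \<ge> 1 \<Longrightarrow> circ (z j) p = lin (zact j) p"
  by (simp add: circ_def z_def)

lemma Sw_Nil[simp]: "Sw [] = hone"
  by (subst Sw.simps) simp

lemma Sw_Cons: "u \<noteq> [] \<Longrightarrow> Sw u = hmul (z (zidx u)) (Sw (zrest u)) + scal tt (lin (zact (zidx u)) (Sw (zrest u)))"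
  by (subst Sw.simps) (simp add: circ_z)

lemma Sw_zw: "j \<ge> 1 \<Longrightarrow> Sw (zw j @ r) = hmul (z j) (Sw r) + scal tt (lin (zact j) (Sw r))"
proof -
  assume j: "j \<ge> 1"
  have ne: "zw j @ r \<noteq> []" by (simp add: zw_def)
  show ?thesis by (simp add: Sw_Cons[OF ne] zidx_zw[OF j] zrest_zw[OF j])
qed

lemma zact_Nil[simp]: "zact i [] = 0"
  by (simp add: zact_def)

lemma zact_zw: "j \<ge> 1 \<Longrightarrow> zact i (zw j @ v) = hmul (zprod i j) (mon v)"
  by (simp add: zact_def zidx_zw zrest_zw) (simp add: zw_def)

lemma S_mon[simp]: "S (mon u) = Sw u"
  by (simp add: S_def)

lemma word_split: "(\<exists>m. u = replicate m X) \<or> (\<exists>m r. u = replicate m X @ Y # r)"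
proof (induction u)
  case Nil then show ?case by (metis replicate_0)
next
  case (Cons c u)
  show ?case
  proof (cases c)
    case X
    from Cons.IH show ?thesis
    proof
      assume "\<exists>m. u = replicate m X" then obtain m where "u = replicate m X" by blast
      then have "c # u = replicate (Suc m) X" using X by simp
      then show ?thesis by blast
    next
      assume "\<exists>m r. u = replicate m X @ Y # r" then obtain m r where "u = replicate m X @ Y # r" by blast
      then have "c # u = replicate (Suc m) X @ Y # r" using X by simp
      then show ?thesis by blast
    qed
  next
    case Y
    then have "c # u = replicate 0 X @ Y # u" by simp
    then show ?thesis by blast
  qed
qed

lemma zprod_mon: "hmul (zprod i j) (mon r) = mon (zw (i + j) @ r) + scal hb (mon (zw (i + j - 1) @ r))"
  by (simp add: zprod_def z_def)

lemma claimA: "k \<ge> 1 \<Longrightarrow> lin (zact i) (hmul (z k) p) = hmul (zprod i k) p"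
proof -
  assume k: "k \<ge> 1"
  have "hmul (z k) p = lin (\<lambda>v. mon (zw k @ v)) p"
    by (subst hmul_expand_right) (simp add: z_def)
  then have "lin (zact i) (hmul (z k) p) = lin (\<lambda>v. hmul (zprod i k) (mon v)) p"
    using k by (simp add: lin_comp zact_zw)
  also have "\<dots> = hmul (zprod i k) p" by (rule hmul_expand_right[symmetric])
  finally show ?thesis .
qed

lemma claimB:
  assumes i: "i \<ge> 1" and k: "k \<ge> 1"
  shows "lin (zact i) (lin (zact k) p) = lin (zact (i + k)) p + scal hb (lin (zact (i + k - 1)) p)"
proof -
  have "lin (zact i) (zact k v) = zact (i + k) v + scal hb (zact (i + k - 1) v)" for v
  proof (cases "v = []")
    case True then show ?thesis by simp
  next
    case False
    define k' where "k' = zidx v"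
    define r where "r = zrest v"
    have k': "k' \<ge> 1" unfolding k'_def by (rule zidx_ge1)
    have zv: "zact j v = hmul (zprod j k') (mon r)" for j
      using False by (simp add: zact_def k'_def r_def)
    obtain a b c where abc: "i = Suc c" "k = Suc a" "k' = Suc b"
      using i k k' by (metis Suc_le_D One_nat_def)
    have "lin (zact i) (zact k v) = zact i (zw (k + k') @ r) + scal hb (zact i (zw (k + k' - 1) @ r))"
      by (simp add: zv zprod_mon)
    also have "\<dots> = hmul (zprod i (k + k')) (mon r) + scal hb (hmul (zprod i (k + k' - 1)) (mon r))"
      using k k' by (simp add: zact_zw)
    also have "\<dots> = zact (i + k) v + scal hb (zact (i + k - 1) v)"
      by (simp add: zv zprod_mon abc) (simp add: add_ac)
    finally show ?thesis .
  qed
  then show ?thesis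
    by (simp add: lin_comp lin_fadd[symmetric] lin_fscal[symmetric])
qed

lemma partI_word: "i \<ge> 1 \<Longrightarrow> S (zact i u) = lin (zact i) (Sw u)"
proof (cases "u = []")
  case True then show ?thesis by (simp add: S_def hone_def)
next
  case False
  assume i: "i \<ge> 1"
  define k where "k = zidx u"
  define r where "r = zrest u"
  have k: "k \<ge> 1" unfolding k_def by (rule zidx_ge1)
  have ik: "i + k - 1 \<ge> 1" "i + k \<ge> 1" using i k by auto
  have Su: "Sw u = hmul (z k) (Sw r) + scal tt (lin (zact k) (Sw r))"
    using False by (simp add: Sw_Cons k_def r_def)
  have "S (zact i u) = S (mon (zw (i + k) @ r) + scal hb (mon (zw (i + k - 1) @ r)))"
    using False by (simp add: zact_def zprod_mon k_def r_def)
  also have "\<dots> = Sw (zw (i + k) @ r) + scal hb (Sw (zw (i + k - 1) @ r))"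
    by (simp add: S_def)
  also have "\<dots> = lin (zact i) (Sw u)"
    unfolding Sw_zw[OF ik(2)] Sw_zw[OF ik(1)] by (simp add: Su claimA[OF k] claimB[OF i k] zprod_def) (simp add: add_ac mult_ac)
  finally show ?thesis .
qed


lemma gw_rep: "gw (replicate m X @ v) = hmul (mon (replicate m X)) (gw v)"
proof (induction m)
  case 0 then show ?case by (simp add: hone_def[symmetric])
next
  case (Suc m)
  then show ?case by (simp add: hx_def hmul_assoc[symmetric])
qed

lemma zact_snocY:
  assumes i: "i \<ge> 1"
  shows "zact i (v @ [Y]) = hmul (mon (replicate i X) + scal hb (mon (replicate (i - 1) X))) (mon (v @ [Y]))"
proof -
  obtain m r' where vr: "v @ [Y] = zw (Suc m) @ r'"
    using word_split[of v] by (metis append_Cons append_assoc zw_Suc append_Nil2)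
  obtain c where c: "i = Suc c" using i by (cases i) auto
  have "zact i (v @ [Y]) = mon (zw (i + Suc m) @ r') + scal hb (mon (zw (i + Suc m - 1) @ r'))"
    by (simp add: vr zact_zw zprod_mon)
  also have "\<dots> = hmul (mon (replicate i X) + scal hb (mon (replicate (i - 1) X))) (mon (v @ [Y]))"
    by (simp add: vr c zw_def replicate_add)
  finally show ?thesis .
qed

lemma claimD:
  assumes i: "i \<ge> 1"
  shows "lin (zact i) (hmul q hy) = hmul (mon (replicate i X) + scal hb (mon (replicate (i - 1) X))) (hmul q hy)"
proof -
  have h: "hmul q hy = lin (\<lambda>u. mon (u @ [Y])) q"
    by (subst hmul_expand_left) (simp add: hy_def)
  show ?thesis unfolding h
    by (simp add: lin_comp zact_snocY[OF i] hmul_lin_right)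
qed

lemma partII_word: "Sw (u @ [Y]) = hmul (gw u) hy"
proof (induction "length u" arbitrary: u rule: less_induct)
  case less
  from word_split[of u] show ?case
  proof
    assume "\<exists>m. u = replicate m X"
    then obtain m where u: "u = replicate m X" by blast
    have "u @ [Y] = zw (Suc m) @ []" by (simp add: u zw_def)
    then have "Sw (u @ [Y]) = Sw (zw (Suc m) @ [])" by simp
    also have "\<dots> = z (Suc m)"
      by (simp only: Sw_zw[of "Suc m"]) (simp add: hone_def z_def)
    also have "\<dots> = hmul (gw u) hy"
      using gw_rep[of m "[]"] by (simp add: u z_def hy_def zw_def hone_def)
    finally show ?thesis .
  next
    assume "\<exists>m r. u = replicate m X @ Y # r"
    then obtain m r where u: "u = replicate m X @ Y # r" by blast
    have IH: "Sw (r @ [Y]) = hmul (gw r) hy"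
      using less by (simp add: u)
    define G where "G = hmul (gw r) hy"
    have "u @ [Y] = zw (Suc m) @ (r @ [Y])" by (simp add: u zw_Suc)
    then have "Sw (u @ [Y]) = hmul (z (Suc m)) G + scal tt (lin (zact (Suc m)) G)"
      by (simp add: Sw_zw IH G_def)
    also have "\<dots> = hmul (z (Suc m)) G + scal tt (hmul (mon (replicate (Suc m) X) + scal hb (mon (replicate m X))) G)"
      unfolding G_def by (subst claimD) auto
    also have "\<dots> = hmul (gw u) hy"
      by (simp add: u gw_rep G_def hmul_assoc z_def zw_def hx_def hy_def cst_def replicate_append_same[symmetric] add_ac mult_ac)
    finally show ?thesis .
  qed
qed

theorem lemma2p1:
  fixes a w :: H
  assumes "a \<in> zmod" and "w \<in> H1"
  shows "S (circ a w) = circ a (S w) \<and> S (hmul w hy) = hmul (gamma w) hy"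
proof
  have "S (circ a w) = lin (\<lambda>v. lin (\<lambda>u. S (zact (length v) u)) w) a"
    by (simp add: circ_def S_def lin_comp)
  also have "\<dots> = lin (\<lambda>v. lin (\<lambda>u. lin (zact (length v)) (Sw u)) w) a"
  proof (rule lin_cong)
    fix v assume "v \<in> Poly_Mapping.keys a"
    then obtain j where "j \<ge> 1" "v = zw j" using assms(1) by (auto simp: zmod_def)
    then have "length v \<ge> 1" by simp
    then show "lin (\<lambda>u. S (zact (length v) u)) w = lin (\<lambda>u. lin (zact (length v)) (Sw u)) w"
      by (simp add: partI_word)
  qed
  also have "\<dots> = circ a (S w)"
    by (simp add: circ_def S_def lin_comp)
  finally show "S (circ a w) = circ a (S w)" .
next
  have h: "hmul w hy = lin (\<lambda>u. mon (u @ [Y])) w"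
    by (subst hmul_expand_left) (simp add: hy_def)
  show "S (hmul w hy) = hmul (gamma w) hy"
    unfolding h by (simp add: S_def gamma_def lin_comp hmul_lin_left partII_word)
qed

end
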